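(* Let $n\ge 2k+1$, $k\ge1$, and let $U=(u_0,u_1,\dots,u_i)$ be a path in $J(n;k,k+1)$. Then: (i) if $i=3$, there is exactly one cycle of length $6$ in $J(n;k,k+1)$ containing $U$; (ii) if $i=2$ and $u_2\in V_1$, there are exactly $n-k-1$ cycles of length $6$ containing $U$; (iii) if $i=2$ and $u_2\in V_2$, there are exactly $k$ cycles of length $6$ containing $U$; (iv) if $i=1$, there are exactly $k(n-k-1)$ cycles of length $6$ containing $U$.
   Context: The doubled Johnson graph $J(n;k,k+1)$ is the bipartite graph with vertex set $V_1\cup V_2$, where $V_1=\binom{[n]}{k}$ and $V_2=\binom{[n]}{k+1}$ are the sets of $k$-subsets and $(k+1)$-subsets of $[n]=\{1,\dots,n\}$, and two vertices $u,v$ are adjacent iff $u\subset v$ or $v\subset u$. A path $(u_0,\dots,u_i)$ is a sequence of distinct vertices with consecutive ones adjacent; a cycle contains the path if it contains all its vertices and edges. *)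

theory Defs
  imports Main
begin

definition V1 :: "nat \<Rightarrow> nat \<Rightarrow> nat set set" where
  "V1 n k = {A. A \<subseteq> {1..n} \<and> card A = k}"

definition V2 :: "nat \<Rightarrow> nat \<Rightarrow> nat set set" where
  "V2 n k = {A. A \<subseteq> {1..n} \<and> card A = Suc k}"

definition jadj :: "nat \<Rightarrow> nat \<Rightarrow> nat set \<Rightarrow> nat set \<Rightarrow> bool" where
  "jadj n k u v \<longleftrightarrow> u \<in> V1 n k \<union> V2 n k \<and> v \<in> V1 n k \<union> V2 n k \<and> (u \<subset> v \<or> v \<subset> u)"

definition is_path :: "nat \<Rightarrow> nat \<Rightarrow> nat set list \<Rightarrow> bool" where
  "is_path n k us \<longleftrightarrow> us \<noteq> [] \<and> distinct us \<and> set us \<subseteq> V1 n k \<union> V2 n k \<and>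
     (\<forall>j. Suc j < length us \<longrightarrow> jadj n k (us ! j) (us ! Suc j))"

definition path_edges :: "'a list \<Rightarrow> 'a set set" where
  "path_edges us = {{us ! j, us ! Suc j} | j. Suc j < length us}"

definition is_cycle_seq :: "nat \<Rightarrow> nat \<Rightarrow> nat \<Rightarrow> nat set list \<Rightarrow> bool" where
  "is_cycle_seq n k m cs \<longleftrightarrow> length cs = m \<and> 3 \<le> m \<and> distinct cs \<and>
     set cs \<subseteq> V1 n k \<union> V2 n k \<and>
     (\<forall>j<m. jadj n k (cs ! j) (cs ! ((Suc j) mod m)))"

definition cycle_edges :: "'a list \<Rightarrow> 'a set set" where
  "cycle_edges cs = {{cs ! j, cs ! ((Suc j) mod length cs)} | j. j < length cs}"

text \<open>A cycle is a subgraph: its vertex set and edge set (so rotations/reflections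
  of the vertex sequence give the same cycle).\<close>
definition cycles :: "nat \<Rightarrow> nat \<Rightarrow> nat \<Rightarrow> (nat set set \<times> nat set set set) set" where
  "cycles n k m = {(set cs, cycle_edges cs) | cs. is_cycle_seq n k m cs}"

definition contains_path :: "(nat set set \<times> nat set set set) \<Rightarrow> nat set list \<Rightarrow> bool" where
  "contains_path C us \<longleftrightarrow> set us \<subseteq> fst C \<and> path_edges us \<subseteq> snd C"

definition num_cycles_containing :: "nat \<Rightarrow> nat \<Rightarrow> nat \<Rightarrow> nat set list \<Rightarrow> nat" where
  "num_cycles_containing n k m us = card {C \<in> cycles n k m. contains_path C us}"

end

theory Submission
  imports Defs
begin

lemma lt6: "(j::nat) < 6 \<longleftrightarrow> j = 0 \<or> j = 1 \<or> j = 2 \<or> j = 3 \<or> j = 4 \<or> j = 5" by arith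
lemma all6: "(\<forall>j<(6::nat). P j) = (P 0 \<and> P 1 \<and> P 2 \<and> P 3 \<and> P 4 \<and> P 5)"
  unfolding lt6 by blast
lemma ex6: "(\<exists>j<(6::nat). P j) = (P 0 \<or> P 1 \<or> P 2 \<or> P 3 \<or> P 4 \<or> P 5)"
  unfolding lt6 by blast

lemma is_cycle_seq_6:
  "is_cycle_seq n k 6 [a,b,c,d,e,f] \<longleftrightarrow> distinct [a,b,c,d,e,f] \<and>
     {a,b,c,d,e,f} \<subseteq> V1 n k \<union> V2 n k \<and> jadj n k a b \<and> jadj n k b c \<and> jadj n k c d
     \<and> jadj n k d e \<and> jadj n k e f \<and> jadj n k f a"
  unfolding is_cycle_seq_def all6 by simp

lemma img6: "{g j |j. j < (6::nat)} = g ` {0,1,2,3,4,5}"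
  using lt6 by auto

lemma cycle_edges_6:
  "cycle_edges [a,b,c,d,e,f] = {{a,b},{b,c},{c,d},{d,e},{e,f},{f,a}}"
proof -
  have l: "length [a,b,c,d,e,f] = 6" by simp
  show ?thesis unfolding cycle_edges_def l img6 by (simp add: insert_commute)
qed

lemma V12_disj: "A \<in> V1 n k \<Longrightarrow> A \<notin> V2 n k"
  by (simp add: V1_def V2_def)

lemma jadj_sym: "jadj n k u v = jadj n k v u"
  unfolding jadj_def by blast

lemma V_fin: "A \<in> V1 n k \<union> V2 n k \<Longrightarrow> finite A"
  unfolding V1_def V2_def by (auto intro: finite_subset)

lemma jadj_V1:
  assumes "jadj n k u v" "u \<in> V1 n k"
  shows "v \<in> V2 n k \<and> (\<exists>a. a \<in> {1..n} \<and> a \<notin> u \<and> v = insert a u)"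
proof -
  have fu: "finite u" and fv: "finite v" using assms V_fin unfolding jadj_def by blast+
  have cu: "card u = k" using assms(2) by (simp add: V1_def)
  have cv: "card v \<ge> k" "card v \<le> Suc k" "v \<subseteq> {1..n}" using assms(1) unfolding jadj_def V1_def V2_def by auto
  have "\<not> v \<subset> u" using psubset_card_mono[OF fu] cu cv by (metis leD)
  hence uv: "u \<subset> v" using assms(1) unfolding jadj_def by blast
  hence "card u < card v" using psubset_card_mono[OF fv] by blast
  hence cv2: "card v = Suc k" using cu cv by simp
  hence "v \<in> V2 n k" using cv by (simp add: V2_def)
  moreover have "card (v - u) = 1" using card_Diff_subset[OF fu] uv cu cv2 by auto
  then obtain a where "v - u = {a}" using card_1_singletonE by blast
  hence "a \<in> {1..n} \<and> a \<notin> u \<and> v = insert a u" using uv cv by blast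
  ultimately show ?thesis by blast
qed

lemma jadj_V2:
  assumes "jadj n k u v" "u \<in> V2 n k"
  shows "v \<in> V1 n k \<and> (\<exists>a. a \<in> {1..n} \<and> a \<notin> v \<and> u = insert a v)"
proof -
  have "v \<in> V1 n k"
  proof (rule ccontr)
    assume "v \<notin> V1 n k"
    hence v2: "v \<in> V2 n k" using assms(1) unfolding jadj_def by blast
    hence "card u = card v" using assms(2) by (simp add: V2_def)
    moreover have "finite u" "finite v" using assms(2) v2 V_fin by blast+
    moreover have "u \<subset> v \<or> v \<subset> u" using assms(1) unfolding jadj_def by blast
    ultimately show False using psubset_card_mono by (metis less_irrefl)
  qed
  moreover have "jadj n k v u" using assms(1) jadj_sym by blast
  ultimately show ?thesis using jadj_V1[of n k v u] by blast
qed

lemma jadj_ins: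
  assumes "A \<in> V1 n k" "a \<in> {1..n}" "a \<notin> A"
  shows "jadj n k A (insert a A)" "insert a A \<in> V2 n k"
proof -
  have f: "finite A" using assms V_fin by blast
  have "insert a A \<subseteq> {1..n}" "card (insert a A) = Suc k"
    using assms f by (auto simp: V1_def)
  thus i: "insert a A \<in> V2 n k" by (simp add: V2_def)
  have "A \<subset> insert a A" using assms(3) by blast
  thus "jadj n k A (insert a A)" using assms(1) i unfolding jadj_def by blast
qed


definition T :: "nat set \<times> nat set \<Rightarrow> nat set set" where
  "T p = {S. fst p \<subset> S \<and> S \<subset> fst p \<union> snd p}"

definition Ed :: "nat \<Rightarrow> nat \<Rightarrow> nat set set \<Rightarrow> nat set set set" where
  "Ed n k S = {{u,v} | u v. u \<in> S \<and> v \<in> S \<and> jadj n k u v}"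

definition Lc :: "nat set \<Rightarrow> nat \<Rightarrow> nat \<Rightarrow> nat \<Rightarrow> nat set list" where
  "Lc C x y z = [insert x C, insert x (insert y C), insert y C, insert y (insert z C),
                 insert z C, insert z (insert x C)]"

definition valid :: "nat \<Rightarrow> nat \<Rightarrow> nat set \<Rightarrow> nat \<Rightarrow> nat \<Rightarrow> nat \<Rightarrow> bool" where
  "valid n k C x y z \<longleftrightarrow> C \<subseteq> {1..n} \<and> Suc (card C) = k \<and> x \<in> {1..n} \<and> y \<in> {1..n} \<and> z \<in> {1..n}
     \<and> x \<notin> C \<and> y \<notin> C \<and> z \<notin> C \<and> x \<noteq> y \<and> y \<noteq> z \<and> x \<noteq> z"

lemma sub3_cases:
  assumes "Y \<subseteq> {x,y,z}" "Y \<noteq> {}" "Y \<noteq> {x,y,z}"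
  shows "Y = {x} \<or> Y = {y} \<or> Y = {z} \<or> Y = {x,y} \<or> Y = {y,z} \<or> Y = {x,z}"
proof -
  have "Y \<in> Pow {x,y,z}" using assms(1) by blast
  thus ?thesis using assms(2,3) by (simp add: Pow_insert) blast
qed

lemma Lc_set:
  assumes "x \<notin> C" "y \<notin> C" "z \<notin> C" "x \<noteq> y" "y \<noteq> z" "x \<noteq> z"
  shows "set (Lc C x y z) = T (C, {x,y,z})"
proof
  show "set (Lc C x y z) \<subseteq> T (C, {x,y,z})"
    using assms unfolding Lc_def T_def by auto
  show "T (C, {x,y,z}) \<subseteq> set (Lc C x y z)"
  proof
    fix S assume "S \<in> T (C, {x,y,z})"
    hence S: "C \<subset> S" "S \<subset> C \<union> {x,y,z}" by (auto simp: T_def)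
    define Y where "Y = S \<inter> {x,y,z}"
    have SY: "S = C \<union> Y" using S unfolding Y_def by blast
    have "Y \<subseteq> {x,y,z}" "Y \<noteq> {}" "Y \<noteq> {x,y,z}" using S SY unfolding Y_def by auto
    hence "Y = {x} \<or> Y = {y} \<or> Y = {z} \<or> Y = {x,y} \<or> Y = {y,z} \<or> Y = {x,z}"
      by (rule sub3_cases)
    thus "S \<in> set (Lc C x y z)" unfolding SY Lc_def by auto
  qed
qed



lemma valid_V1:
  assumes "valid n k C x y z"
  shows "insert x C \<in> V1 n k" "insert y C \<in> V1 n k" "insert z C \<in> V1 n k"
proof -
  have f: "finite C" using assms unfolding valid_def by (meson finite_atLeastAtMost finite_subset)
  show "insert x C \<in> V1 n k" "insert y C \<in> V1 n k" "insert z C \<in> V1 n k"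
    using assms f unfolding valid_def V1_def by auto
qed

lemma Lc_cycle:
  assumes v: "valid n k C x y z"
  shows "is_cycle_seq n k 6 (Lc C x y z)"
proof -
  note V = valid_V1[OF v]
  have d: "x \<notin> C" "y \<notin> C" "z \<notin> C" "x \<noteq> y" "y \<noteq> z" "x \<noteq> z" "x \<in> {1..n}" "y \<in> {1..n}" "z \<in> {1..n}"
    using v unfolding valid_def by auto
  have j1: "jadj n k (insert x C) (insert x (insert y C))" "insert x (insert y C) \<in> V2 n k"
    using jadj_ins[OF V(1), of y] d by (auto simp: insert_commute)
  have j2: "jadj n k (insert x (insert y C)) (insert y C)"
    using jadj_ins[OF V(2), of x] d jadj_sym by blast
  have j3: "jadj n k (insert y C) (insert y (insert z C))" "insert y (insert z C) \<in> V2 n k"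
    using jadj_ins[OF V(2), of z] d by (auto simp: insert_commute)
  have j4: "jadj n k (insert y (insert z C)) (insert z C)"
    using jadj_ins[OF V(3), of y] d jadj_sym by blast
  have j5: "jadj n k (insert z C) (insert z (insert x C))" "insert z (insert x C) \<in> V2 n k"
    using jadj_ins[OF V(3), of x] d by (auto simp: insert_commute)
  have j6: "jadj n k (insert z (insert x C)) (insert x C)"
    using jadj_ins[OF V(1), of z] d jadj_sym by blast
  have "distinct (map (\<lambda>S. (x \<in> S, y \<in> S, z \<in> S)) (Lc C x y z))"
    using d unfolding Lc_def by simp
  hence dist: "distinct (Lc C x y z)" by (simp add: distinct_map)
  show ?thesis unfolding Lc_def is_cycle_seq_6
    using dist V j1 j2 j3 j4 j5 j6 by (simp add: Lc_def)
qed

lemma Lc_edges: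
  assumes v: "valid n k C x y z"
  shows "cycle_edges (Lc C x y z) = Ed n k (set (Lc C x y z))"
proof
  have c: "is_cycle_seq n k 6 (Lc C x y z)" by (rule Lc_cycle[OF v])
  have d: "x \<notin> C" "y \<notin> C" "z \<notin> C" "x \<noteq> y" "y \<noteq> z" "x \<noteq> z"
    using v unfolding valid_def by auto
  show "cycle_edges (Lc C x y z) \<subseteq> Ed n k (set (Lc C x y z))"
  proof -
    have ed: "{a,b} \<in> Ed n k S" if "a \<in> S" "b \<in> S" "jadj n k a b" for a b S
      unfolding Ed_def using that by blast
    have J: "jadj n k (insert x C) (insert x (insert y C))" "jadj n k (insert x (insert y C)) (insert y C)"
      "jadj n k (insert y C) (insert y (insert z C))" "jadj n k (insert y (insert z C)) (insert z C)"
      "jadj n k (insert z C) (insert z (insert x C))" "jadj n k (insert z (insert x C)) (insert x C)"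
      using c unfolding Lc_def is_cycle_seq_6 by blast+
    show ?thesis unfolding Lc_def cycle_edges_6
      by (intro insert_subsetI empty_subsetI ed J) simp_all
  qed
  have key: "{u,v} \<in> cycle_edges (Lc C x y z) \<or> {v,u} \<in> cycle_edges (Lc C x y z)"
    if "u \<in> set (Lc C x y z)" "v \<in> set (Lc C x y z)" "u \<subset> v" for u v
  proof -
    have "u = insert x C \<or> u = insert x (insert y C) \<or> u = insert y C \<or> u = insert y (insert z C) \<or> u = insert z C \<or> u = insert z (insert x C)"
      "v = insert x C \<or> v = insert x (insert y C) \<or> v = insert y C \<or> v = insert y (insert z C) \<or> v = insert z C \<or> v = insert z (insert x C)"
      using that(1,2) unfolding Lc_def by simp_all
    thus ?thesis using that(3) d unfolding cycle_edges_6 Lc_def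
      by (elim disjE) (simp_all add: psubset_eq)
  qed
  show "Ed n k (set (Lc C x y z)) \<subseteq> cycle_edges (Lc C x y z)"
  proof
    fix e assume "e \<in> Ed n k (set (Lc C x y z))"
    then obtain u v where e: "e = {u,v}" "u \<in> set (Lc C x y z)" "v \<in> set (Lc C x y z)" "jadj n k u v"
      unfolding Ed_def by blast
    have uv: "{v,u} = {u,v}" by (rule insert_commute)
    have "u \<subset> v \<or> v \<subset> u" using e(4) unfolding jadj_def by blast
    thus "e \<in> cycle_edges (Lc C x y z)"
    proof
      assume "u \<subset> v" thus ?thesis using key[OF e(2,3)] e(1) uv by argo
    next
      assume "v \<subset> u" thus ?thesis using key[OF e(3,2)] e(1) uv by argo
    qed
  qed
qed

lemma cycle_form:
  assumes cy: "is_cycle_seq n k 6 [c0,c1,c2,c3,c4,c5]" and c0V: "c0 \<in> V1 n k"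
  shows "\<exists>C x y z. valid n k C x y z \<and> [c0,c1,c2,c3,c4,c5] = Lc C x y z"
proof -
  have dist: "distinct [c0,c1,c2,c3,c4,c5]" and J01: "jadj n k c0 c1" and J12: "jadj n k c1 c2"
    and J23: "jadj n k c2 c3" and J34: "jadj n k c3 c4" and J45: "jadj n k c4 c5" and J50: "jadj n k c5 c0"
    using cy unfolding is_cycle_seq_6 by blast+
  obtain p where p: "p \<in> {1..n}" "p \<notin> c0" "c1 = insert p c0" and c1V: "c1 \<in> V2 n k"
    using jadj_V1[OF J01 c0V] by blast
  obtain q where q: "q \<in> {1..n}" "q \<notin> c2" "c1 = insert q c2" and c2V: "c2 \<in> V1 n k"
    using jadj_V2[OF J12 c1V] by blast
  have qp: "q \<noteq> p"
  proof
    assume "q = p"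
    hence "c0 = c2" using p q insert_ident by metis
    thus False using dist by simp
  qed
  have qc0: "q \<in> c0" using p q qp by blast
  define I where "I = c0 - {q}"
  have c0I: "c0 = insert q I" "q \<notin> I" using qc0 unfolding I_def by blast+
  have "c2 = c1 - {q}" using q by simp
  also have "\<dots> = insert p I" using p(3) qp unfolding I_def by auto
  finally have c2I: "c2 = insert p I" .
  have J05: "jadj n k c0 c5" using J50 jadj_sym by blast
  obtain r where r: "r \<in> {1..n}" "r \<notin> c0" "c5 = insert r c0" and c5V: "c5 \<in> V2 n k"
    using jadj_V1[OF J05 c0V] by blast
  have J54: "jadj n k c5 c4" using J45 jadj_sym by blast
  obtain s where s: "s \<notin> c4" "c5 = insert s c4" and c4V: "c4 \<in> V1 n k"
    using jadj_V2[OF J54 c5V] by blast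
  have sr: "s \<noteq> r"
  proof
    assume "s = r"
    hence "c0 = c4" using r s insert_ident by metis
    thus False using dist by simp
  qed
  have sc0: "s \<in> c0" using r s sr by blast
  have "c4 = c5 - {s}" using s by simp
  also have "\<dots> = insert r (c0 - {s})" using r(3) sr by auto
  finally have c4I: "c4 = insert r (c0 - {s})" .
  obtain t where t: "t \<notin> c2" "c3 = insert t c2"
    using jadj_V1[OF J23 c2V] by blast
  have c43: "c4 \<subseteq> c3" using J34 c4V jadj_V1[of n k c4 c3] jadj_sym by blast
  have sq: "s = q"
  proof (rule ccontr)
    assume "s \<noteq> q"
    hence "q \<in> c4" using c4I qc0 by blast
    hence "q = t" using c43 t c2I c0I qp by blast
    have "r \<in> c3" using c43 c4I by blast
    hence "r = p" using t c2I c0I r \<open>q = t\<close> by blast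
    hence "c5 = c1" using r p by simp
    thus False using dist by simp
  qed
  have c4I': "c4 = insert r I" using c4I sq unfolding I_def by simp
  have rp: "r \<noteq> p"
  proof
    assume "r = p" hence "c4 = c2" using c4I' c2I by simp
    thus False using dist by simp
  qed
  have "r = t" using c43 c4I' t c2I r(2) c0I rp by blast
  hence c3I: "c3 = insert p (insert r I)" using t c2I by (simp add: insert_commute)
  have fin: "finite c0" using c0V V_fin by blast
  have "card c0 = k" "c0 \<subseteq> {1..n}" using c0V by (auto simp: V1_def)
  hence "Suc (card I) = k" "I \<subseteq> {1..n}" using c0I fin by auto
  hence "valid n k I q p r" unfolding valid_def using p q r c0I qp rp qc0 by auto
  moreover have "[c0,c1,c2,c3,c4,c5] = Lc I q p r"
    unfolding Lc_def using c0I c2I c3I c4I' p r by (simp add: insert_commute)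
  ultimately show ?thesis by blast
qed



definition G :: "nat \<Rightarrow> nat \<Rightarrow> (nat set \<times> nat set) set" where
  "G n k = {(C,X). C \<subseteq> {1..n} \<and> Suc (card C) = k \<and> X \<subseteq> {1..n} \<and> C \<inter> X = {} \<and> card X = 3}"

definition Phi :: "nat \<Rightarrow> nat \<Rightarrow> nat set \<times> nat set \<Rightarrow> nat set set \<times> nat set set set" where
  "Phi n k p = (T p, Ed n k (T p))"

lemma valid_G: "valid n k C x y z \<Longrightarrow> (C,{x,y,z}) \<in> G n k"
  unfolding valid_def G_def by auto

lemma G_valid: "p \<in> G n k \<Longrightarrow> \<exists>C x y z. p = (C,{x,y,z}) \<and> valid n k C x y z"
proof -
  assume "p \<in> G n k"
  then obtain C X where p: "p = (C,X)" "C \<subseteq> {1..n}" "Suc (card C) = k" "X \<subseteq> {1..n}" "C \<inter> X = {}" "card X = 3"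
    unfolding G_def by blast
  then obtain x y z where "X = {x,y,z}" "x \<noteq> y" "y \<noteq> z" "x \<noteq> z" using card_3_iff by metis
  thus ?thesis using p unfolding valid_def by auto
qed

lemma Phi_Lc: "valid n k C x y z \<Longrightarrow> Phi n k (C,{x,y,z}) = (set (Lc C x y z), cycle_edges (Lc C x y z))"
  unfolding Phi_def using Lc_set Lc_edges unfolding valid_def by metis

lemma rot_cycle:
  assumes "is_cycle_seq n k 6 [c0,c1,c2,c3,c4,c5]"
  shows "is_cycle_seq n k 6 [c1,c2,c3,c4,c5,c0]" "set [c1,c2,c3,c4,c5,c0] = set [c0,c1,c2,c3,c4,c5]"
    "cycle_edges [c1,c2,c3,c4,c5,c0] = cycle_edges [c0,c1,c2,c3,c4,c5]"
proof -
  have d: "distinct [c1,c2,c3,c4,c5,c0]"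
    using distinct1_rotate[of "[c0,c1,c2,c3,c4,c5]"] assms unfolding is_cycle_seq_6 by simp
  show "is_cycle_seq n k 6 [c1,c2,c3,c4,c5,c0]" using assms d unfolding is_cycle_seq_6 by blast
  show "set [c1,c2,c3,c4,c5,c0] = set [c0,c1,c2,c3,c4,c5]" by (simp add: insert_commute)
  show "cycle_edges [c1,c2,c3,c4,c5,c0] = cycle_edges [c0,c1,c2,c3,c4,c5]"
    unfolding cycle_edges_6 by (simp add: insert_commute)
qed

lemma cyc_V1:
  assumes "is_cycle_seq n k 6 [c0,c1,c2,c3,c4,c5]" "c0 \<in> V1 n k"
  shows "(set [c0,c1,c2,c3,c4,c5], cycle_edges [c0,c1,c2,c3,c4,c5]) \<in> Phi n k ` G n k"
proof -
  obtain C x y z where v: "valid n k C x y z" and e: "[c0,c1,c2,c3,c4,c5] = Lc C x y z"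
    using cycle_form[OF assms] by blast
  show ?thesis unfolding e using Phi_Lc[OF v, symmetric] valid_G[OF v] by (metis image_eqI)
qed

lemma cycles_eq: "cycles n k 6 = Phi n k ` G n k"
proof
  show "cycles n k 6 \<subseteq> Phi n k ` G n k"
  proof
    fix Cy assume "Cy \<in> cycles n k 6"
    then obtain cs where cs: "Cy = (set cs, cycle_edges cs)" "is_cycle_seq n k 6 cs"
      unfolding cycles_def by blast
    hence "length cs = 6" unfolding is_cycle_seq_def by blast
    then obtain c0 c1 c2 c3 c4 c5 where l: "cs = [c0,c1,c2,c3,c4,c5]"
      by (auto simp: length_Suc_conv numeral_eq_Suc)
    have cy: "is_cycle_seq n k 6 [c0,c1,c2,c3,c4,c5]" using cs l by simp
    show "Cy \<in> Phi n k ` G n k"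
    proof (cases "c0 \<in> V1 n k")
      case True thus ?thesis using cyc_V1[OF cy] cs l by simp
    next
      case False
      hence c0: "c0 \<in> V2 n k" using cy unfolding is_cycle_seq_6 by blast
      have "jadj n k c0 c1" using cy unfolding is_cycle_seq_6 by blast
      hence "c1 \<in> V1 n k" using jadj_V2 c0 by blast
      thus ?thesis using cyc_V1[OF rot_cycle(1)[OF cy]] rot_cycle(2,3)[OF cy] cs l by simp
    qed
  qed
  show "Phi n k ` G n k \<subseteq> cycles n k 6"
  proof
    fix Cy assume "Cy \<in> Phi n k ` G n k"
    then obtain p where "p \<in> G n k" "Cy = Phi n k p" by blast
    then obtain C x y z where "p = (C,{x,y,z})" "valid n k C x y z" "Cy = Phi n k p" using G_valid by metis
    thus "Cy \<in> cycles n k 6" using Phi_Lc Lc_cycle unfolding cycles_def by blast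
  qed
qed

lemma Inter_Lc: "x \<notin> C \<Longrightarrow> y \<notin> C \<Longrightarrow> x \<noteq> y \<Longrightarrow> \<Inter> (set (Lc C x y z)) = C"
  unfolding Lc_def by auto

lemma Union_Lc: "\<Union> (set (Lc C x y z)) = C \<union> {x,y,z}"
  unfolding Lc_def by auto

lemma T_G:
  assumes "p \<in> G n k"
  shows "\<Inter> (T p) = fst p" "\<Union> (T p) = fst p \<union> snd p" "fst p \<inter> snd p = {}"
proof -
  obtain C x y z where a: "p = (C,{x,y,z})" "valid n k C x y z" using G_valid[OF assms] by blast
  have vs: "x \<notin> C" "y \<notin> C" "z \<notin> C" "x \<noteq> y" "y \<noteq> z" "x \<noteq> z" using a(2) unfolding valid_def by auto
  have s1: "T p = set (Lc C x y z)" using Lc_set[of x C y z] vs a(1) by simp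
  show "\<Inter> (T p) = fst p" unfolding s1 using Inter_Lc[of x C y z] vs a(1) by simp
  show "\<Union> (T p) = fst p \<union> snd p" unfolding s1 using Union_Lc[of C x y z] a(1) by simp
  show "fst p \<inter> snd p = {}" using vs a(1) by simp
qed

lemma T_inj: "inj_on T (G n k)"
proof
  fix p p' assume p: "p \<in> G n k" and p': "p' \<in> G n k" and e: "T p = T p'"
  have 1: "fst p = fst p'" using T_G(1)[OF p] T_G(1)[OF p'] e by simp
  have 2: "fst p \<union> snd p = fst p' \<union> snd p'" using T_G(2)[OF p] T_G(2)[OF p'] e by simp
  have "snd p = (fst p \<union> snd p) - fst p" using T_G(3)[OF p] by blast
  also have "\<dots> = (fst p' \<union> snd p') - fst p'" using 1 2 by simp
  also have "\<dots> = snd p'" using T_G(3)[OF p'] by blast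
  finally show "p = p'" using 1 by (simp add: prod_eq_iff)
qed

lemma Phi_inj: "inj_on (Phi n k) (G n k)"
  using T_inj unfolding inj_on_def Phi_def by auto

lemma contains_iff:
  assumes "is_path n k us"
  shows "contains_path (Phi n k p) us \<longleftrightarrow> set us \<subseteq> T p"
proof
  assume "contains_path (Phi n k p) us" thus "set us \<subseteq> T p" unfolding contains_path_def Phi_def by simp
next
  assume s: "set us \<subseteq> T p"
  have "path_edges us \<subseteq> Ed n k (T p)"
  proof
    fix e assume "e \<in> path_edges us"
    then obtain j where j: "e = {us ! j, us ! Suc j}" "Suc j < length us" unfolding path_edges_def by blast
    have "us ! j \<in> T p" "us ! Suc j \<in> T p" using s j(2) nth_mem by (metis Suc_lessD subsetD)+
    moreover have "jadj n k (us ! j) (us ! Suc j)" using assms j(2) unfolding is_path_def by blast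
    ultimately show "e \<in> Ed n k (T p)" unfolding Ed_def j(1) by blast
  qed
  thus "contains_path (Phi n k p) us" using s unfolding contains_path_def Phi_def by simp
qed

lemma num_eq:
  assumes "is_path n k us"
  shows "num_cycles_containing n k 6 us = card {p \<in> G n k. set us \<subseteq> T p}"
proof -
  have "{C \<in> Phi n k ` G n k. contains_path C us} = Phi n k ` {p \<in> G n k. contains_path (Phi n k p) us}"
    by blast
  also have "{p \<in> G n k. contains_path (Phi n k p) us} = {p \<in> G n k. set us \<subseteq> T p}"
    using contains_iff[OF assms] by simp
  finally have e: "{C \<in> cycles n k 6. contains_path C us} = Phi n k ` {p \<in> G n k. set us \<subseteq> T p}"
    unfolding cycles_eq .
  have "inj_on (Phi n k) {p \<in> G n k. set us \<subseteq> T p}"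
    by (rule inj_on_subset[OF Phi_inj]) blast
  thus ?thesis unfolding num_cycles_containing_def e by (rule card_image)
qed



definition fe :: "nat \<Rightarrow> nat set \<Rightarrow> nat \<times> nat \<Rightarrow> nat set \<times> nat set" where
  "fe a A q = (case q of (b,z) \<Rightarrow> (A - {b}, {b,a,z}))"

lemma fe_simp: "fe a A (b,z) = (A - {b}, {b,a,z})" by (simp add: fe_def)

lemma T_mem: "S \<in> T p \<longleftrightarrow> fst p \<subset> S \<and> S \<subset> fst p \<union> snd p"
  by (simp add: T_def)

lemma edge_set:
  assumes A: "A \<in> V1 n k" and a: "a \<in> {1..n}" "a \<notin> A"
  shows "{p \<in> G n k. A \<in> T p \<and> insert a A \<in> T p} = fe a A ` (A \<times> ({1..n} - insert a A))"
proof
  have fA: "finite A" using A V_fin by blast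
  have cA: "card A = k" "A \<subseteq> {1..n}" using A by (auto simp: V1_def)
  show "fe a A ` (A \<times> ({1..n} - insert a A)) \<subseteq> {p \<in> G n k. A \<in> T p \<and> insert a A \<in> T p}"
  proof
    fix p assume "p \<in> fe a A ` (A \<times> ({1..n} - insert a A))"
    then obtain q where q: "q \<in> A \<times> ({1..n} - insert a A)" "p = fe a A q" by blast
    obtain b z where "q = (b,z)" by (cases q)
    hence bz: "b \<in> A" "z \<in> {1..n}" "z \<noteq> a" "z \<notin> A" "p = (A - {b}, {b,a,z})"
      using q by (auto simp: fe_simp)
    have ba: "b \<noteq> a" "z \<noteq> b" using bz a by auto
    have "Suc (card (A - {b})) = k" using cA fA bz(1) card_Suc_Diff1 by metis
    moreover have "card {b,a,z} = 3" using ba bz(3) by simp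
    moreover have "A - {b} \<subseteq> {1..n}" "{b,a,z} \<subseteq> {1..n}" using cA bz a by auto
    moreover have "(A - {b}) \<inter> {b,a,z} = {}" using a bz by auto
    ultimately have "p \<in> G n k" unfolding G_def bz(5) by simp
    moreover have "A \<in> T p" unfolding T_mem bz(5) using bz a by auto
    moreover have "insert a A \<in> T p" unfolding T_mem bz(5) using bz a by auto
    ultimately show "p \<in> {p \<in> G n k. A \<in> T p \<and> insert a A \<in> T p}" by blast
  qed
  show "{p \<in> G n k. A \<in> T p \<and> insert a A \<in> T p} \<subseteq> fe a A ` (A \<times> ({1..n} - insert a A))"
  proof
    fix p assume pm: "p \<in> {p \<in> G n k. A \<in> T p \<and> insert a A \<in> T p}"
    obtain C X where p0: "p = (C,X)" by (cases p)
    have p: "p = (C,X)" "C \<subseteq> {1..n}" "Suc (card C) = k" "X \<subseteq> {1..n}" "C \<inter> X = {}" "card X = 3"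
      using pm p0 unfolding G_def by simp_all
    have t: "C \<subset> A" "A \<subset> C \<union> X" "C \<subset> insert a A" "insert a A \<subset> C \<union> X"
      using pm p0 unfolding T_mem by simp_all
    have "card (A - C) = 1" using card_Diff_subset[of C A] t(1) cA p(3) fA finite_subset by fastforce
    then obtain b where b: "A - C = {b}" using card_1_singletonE by blast
    have bA: "b \<in> A" "b \<notin> C" using b by blast+
    have C: "C = A - {b}" using b t(1) by blast
    have bX: "b \<in> X" using bA t(2) by blast
    have aX: "a \<in> X" using t(4) t(1) a(2) by blast
    have fX: "finite X" using p(4) finite_subset by blast
    have "card (X - {b,a}) = 1" using card_Diff_subset[of "{b,a}" X] bX aX bA a(2) p(6) fX
      by (cases "b = a") auto
    then obtain z where z: "X - {b,a} = {z}" using card_1_singletonE by blast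
    have X: "X = {b,a,z}" using z bX aX by blast
    have zn: "z \<in> {1..n}" "z \<noteq> a" "z \<notin> A" using z p(4) p(5) C bA by blast+
    show "p \<in> fe a A ` (A \<times> ({1..n} - insert a A))"
      using zn bA unfolding p(1) C X fe_def by (intro image_eqI[of _ _ "(b,z)"]) auto
  qed
qed


lemma fe_inj:
  assumes "a \<notin> A"
  shows "inj_on (fe a A) (A \<times> ({1..n} - insert a A))"
proof
  fix q q' assume q: "q \<in> A \<times> ({1..n} - insert a A)" and q': "q' \<in> A \<times> ({1..n} - insert a A)"
    and e: "fe a A q = fe a A q'"
  obtain b z where bz: "q = (b,z)" by (cases q)
  obtain b' z' where bz': "q' = (b',z')" by (cases q')
  have m: "b \<in> A" "z \<notin> A" "z \<noteq> a" "b' \<in> A" "z' \<notin> A" "z' \<noteq> a" using q q' bz bz' by auto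
  have e1: "A - {b} = A - {b'}" "{b,a,z} = {b',a,z'}" using e bz bz' by (simp_all add: fe_simp)
  have "b = b'" using e1(1) m by blast
  moreover have "z \<in> {b',a,z'}" using e1(2) by blast
  hence "z = z'" using m by blast
  ultimately show "q = q'" using bz bz' by simp
qed

lemma count_gen:
  assumes A: "A \<in> V1 n k" and a: "a \<in> {1..n}" "a \<notin> A"
  shows "card {p \<in> G n k. A \<in> T p \<and> insert a A \<in> T p \<and> P p}
       = card {q \<in> A \<times> ({1..n} - insert a A). P (fe a A q)}"
proof -
  have "{p \<in> G n k. A \<in> T p \<and> insert a A \<in> T p \<and> P p}
      = {p \<in> {p \<in> G n k. A \<in> T p \<and> insert a A \<in> T p}. P p}" by blast
  also have "\<dots> = {p \<in> fe a A ` (A \<times> ({1..n} - insert a A)). P p}" unfolding edge_set[OF A a] ..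
  also have "\<dots> = fe a A ` {q \<in> A \<times> ({1..n} - insert a A). P (fe a A q)}" by blast
  finally have e: "{p \<in> G n k. A \<in> T p \<and> insert a A \<in> T p \<and> P p}
      = fe a A ` {q \<in> A \<times> ({1..n} - insert a A). P (fe a A q)}" .
  have "inj_on (fe a A) {q \<in> A \<times> ({1..n} - insert a A). P (fe a A q)}"
    by (rule inj_on_subset[OF fe_inj[OF a(2)]]) blast
  thus ?thesis unfolding e by (rule card_image)
qed

lemma card_Z:
  assumes A: "A \<in> V1 n k" and a: "a \<in> {1..n}" "a \<notin> A"
  shows "card ({1..n} - insert a A) = n - k - 1"
proof -
  have f: "finite A" using A V_fin by blast
  have c: "card A = k" "A \<subseteq> {1..n}" using A unfolding V1_def by simp_all
  have "card (insert a A) = Suc k" using f c a by simp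
  moreover have "insert a A \<subseteq> {1..n}" using c a by blast
  ultimately show ?thesis using card_Diff_subset[of "insert a A" "{1..n}"] f by simp
qed

lemma psub_wit: "A \<subseteq> B \<Longrightarrow> x \<in> B \<Longrightarrow> x \<notin> A \<Longrightarrow> A \<subset> B" by blast

lemma P2:
  assumes "b \<in> A" "z \<notin> A" "z \<noteq> a" "a \<notin> A" "b0 \<in> A"
  shows "insert a A - {b0} \<in> T (A - {b}, {b,a,z}) \<longleftrightarrow> b = b0"
proof
  assume "insert a A - {b0} \<in> T (A - {b}, {b,a,z})"
  hence "A - {b} \<subseteq> insert a A - {b0}" unfolding T_mem by auto
  thus "b = b0" using assms(5) by blast
next
  assume e: "b = b0"
  have 1: "A - {b} \<subset> insert a A - {b0}"
    by (rule psub_wit[where x=a]) (use assms e in blast)+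
  have 2: "insert a A - {b0} \<subset> (A - {b}) \<union> {b,a,z}"
    by (rule psub_wit[where x=b]) (use assms e in blast)+
  show "insert a A - {b0} \<in> T (A - {b}, {b,a,z})" unfolding T_mem using 1 2 by simp
qed

lemma P3:
  assumes "b \<in> A" "z \<notin> A" "z \<noteq> a" "a \<notin> A" "c \<notin> A" "c \<noteq> a"
  shows "insert c A \<in> T (A - {b}, {b,a,z}) \<longleftrightarrow> c = z"
proof
  assume "insert c A \<in> T (A - {b}, {b,a,z})"
  hence "insert c A \<subseteq> (A - {b}) \<union> {b,a,z}" unfolding T_mem by auto
  thus "c = z" using assms by blast
next
  assume e: "c = z"
  have 1: "A - {b} \<subset> insert c A"
    by (rule psub_wit[where x=b]) (use assms e in blast)+
  have 2: "insert c A \<subset> (A - {b}) \<union> {b,a,z}"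
    by (rule psub_wit[where x=a]) (use assms e in blast)+
  show "insert c A \<in> T (A - {b}, {b,a,z})" unfolding T_mem using 1 2 by simp
qed

lemma P4:
  assumes "b \<in> A" "z \<notin> A" "z \<noteq> a" "a \<notin> A" "b0 \<in> A" "c \<notin> insert a A"
  shows "insert a A - {b0} \<in> T (A - {b}, {b,a,z}) \<and> insert c (insert a A - {b0}) \<in> T (A - {b}, {b,a,z})
     \<longleftrightarrow> b = b0 \<and> c = z"
proof
  assume h: "insert a A - {b0} \<in> T (A - {b}, {b,a,z}) \<and> insert c (insert a A - {b0}) \<in> T (A - {b}, {b,a,z})"
  hence "b = b0" using P2[OF assms(1-5)] by blast
  moreover have "insert c (insert a A - {b0}) \<subseteq> (A - {b}) \<union> {b,a,z}" using h unfolding T_mem by auto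
  ultimately show "b = b0 \<and> c = z" using assms by blast
next
  assume e: "b = b0 \<and> c = z"
  have 1: "A - {b} \<subset> insert c (insert a A - {b0})"
    by (rule psub_wit[where x=a]) (use assms e in blast)+
  have 2: "insert c (insert a A - {b0}) \<subset> (A - {b}) \<union> {b,a,z}"
    by (rule psub_wit[where x=b]) (use assms e in blast)+
  show "insert a A - {b0} \<in> T (A - {b}, {b,a,z}) \<and> insert c (insert a A - {b0}) \<in> T (A - {b}, {b,a,z})"
    unfolding T_mem using 1 2 P2[OF assms(1-5)] e unfolding T_mem by simp
qed


lemma count1:
  assumes A: "A \<in> V1 n k" and a: "a \<in> {1..n}" "a \<notin> A"
  shows "card {p \<in> G n k. A \<in> T p \<and> insert a A \<in> T p \<and> True} = k * (n - k - 1)"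
proof -
  have "card {p \<in> G n k. A \<in> T p \<and> insert a A \<in> T p \<and> True}
     = card {q \<in> A \<times> ({1..n} - insert a A). True}" by (rule count_gen[OF A a])
  also have "\<dots> = card A * card ({1..n} - insert a A)" by (simp add: card_cartesian_product)
  also have "\<dots> = k * (n - k - 1)" using card_Z[OF A a] A by (simp add: V1_def)
  finally show ?thesis .
qed

lemma count2:
  assumes A: "A \<in> V1 n k" and a: "a \<in> {1..n}" "a \<notin> A" and b0: "b0 \<in> A"
  shows "card {p \<in> G n k. A \<in> T p \<and> insert a A \<in> T p \<and> insert a A - {b0} \<in> T p} = n - k - 1"
proof -
  have "card {p \<in> G n k. A \<in> T p \<and> insert a A \<in> T p \<and> insert a A - {b0} \<in> T p}
     = card {q \<in> A \<times> ({1..n} - insert a A). insert a A - {b0} \<in> T (fe a A q)}" by (rule count_gen[OF A a])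
  also have "{q \<in> A \<times> ({1..n} - insert a A). insert a A - {b0} \<in> T (fe a A q)} = {b0} \<times> ({1..n} - insert a A)"
  proof (rule set_eqI)
    fix q :: "nat \<times> nat" obtain b z where q: "q = (b,z)" by (cases q)
    show "q \<in> {q \<in> A \<times> ({1..n} - insert a A). insert a A - {b0} \<in> T (fe a A q)} \<longleftrightarrow> q \<in> {b0} \<times> ({1..n} - insert a A)"
      unfolding q fe_simp using P2[of b A z a b0] a b0 by (auto simp: fe_simp)
  qed
  also have "card ({b0} \<times> ({1..n} - insert a A)) = n - k - 1" using card_Z[OF A a] by (simp add: card_cartesian_product)
  finally show ?thesis .
qed

lemma count3:
  assumes A: "A \<in> V1 n k" and a: "a \<in> {1..n}" "a \<notin> A" and c: "c \<in> {1..n}" "c \<notin> A" "c \<noteq> a"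
  shows "card {p \<in> G n k. A \<in> T p \<and> insert a A \<in> T p \<and> insert c A \<in> T p} = k"
proof -
  have "card {p \<in> G n k. A \<in> T p \<and> insert a A \<in> T p \<and> insert c A \<in> T p}
     = card {q \<in> A \<times> ({1..n} - insert a A). insert c A \<in> T (fe a A q)}" by (rule count_gen[OF A a])
  also have "{q \<in> A \<times> ({1..n} - insert a A). insert c A \<in> T (fe a A q)} = A \<times> {c}"
  proof (rule set_eqI)
    fix q :: "nat \<times> nat" obtain b z where q: "q = (b,z)" by (cases q)
    show "q \<in> {q \<in> A \<times> ({1..n} - insert a A). insert c A \<in> T (fe a A q)} \<longleftrightarrow> q \<in> A \<times> {c}"
      unfolding q fe_simp using P3[of b A z a c] a c by (auto simp: fe_simp)
  qed
  also have "card (A \<times> {c}) = k" using A by (simp add: card_cartesian_product V1_def)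
  finally show ?thesis .
qed

lemma count4:
  assumes A: "A \<in> V1 n k" and a: "a \<in> {1..n}" "a \<notin> A" and b0: "b0 \<in> A"
    and c: "c \<in> {1..n}" "c \<notin> insert a A"
  shows "card {p \<in> G n k. A \<in> T p \<and> insert a A \<in> T p \<and>
      (insert a A - {b0} \<in> T p \<and> insert c (insert a A - {b0}) \<in> T p)} = 1"
proof -
  have "card {p \<in> G n k. A \<in> T p \<and> insert a A \<in> T p \<and>
      (insert a A - {b0} \<in> T p \<and> insert c (insert a A - {b0}) \<in> T p)}
     = card {q \<in> A \<times> ({1..n} - insert a A). insert a A - {b0} \<in> T (fe a A q) \<and> insert c (insert a A - {b0}) \<in> T (fe a A q)}"
    by (rule count_gen[OF A a])
  also have "{q \<in> A \<times> ({1..n} - insert a A). insert a A - {b0} \<in> T (fe a A q) \<and> insert c (insert a A - {b0}) \<in> T (fe a A q)} = {(b0,c)}"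
  proof (rule set_eqI)
    fix q :: "nat \<times> nat" obtain b z where q: "q = (b,z)" by (cases q)
    show "q \<in> {q \<in> A \<times> ({1..n} - insert a A). insert a A - {b0} \<in> T (fe a A q) \<and> insert c (insert a A - {b0}) \<in> T (fe a A q)} \<longleftrightarrow> q \<in> {(b0,c)}"
      unfolding q fe_simp using P4[of b A z a b0 c] a b0 c by (auto simp: fe_simp)
  qed
  finally show ?thesis by simp
qed


lemma path_adj: "is_path n k us \<Longrightarrow> Suc j < length us \<Longrightarrow> jadj n k (us ! j) (us ! Suc j)"
  unfolding is_path_def by blast

lemma main2:
  assumes p: "is_path n k [u0,u1]"
  shows "card {p \<in> G n k. set [u0,u1] \<subseteq> T p} = k * (n - k - 1)"
proof -
  have j: "jadj n k u0 u1" using path_adj[OF p, of 0] by simp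
  have u0: "u0 \<in> V1 n k \<union> V2 n k" using p unfolding is_path_def by simp
  obtain A a where Aa: "A \<in> V1 n k" "a \<in> {1..n}" "a \<notin> A" "set [u0,u1] = {A, insert a A}"
  proof (cases "u0 \<in> V1 n k")
    case True
    then obtain a where "a \<in> {1..n}" "a \<notin> u0" "u1 = insert a u0" using jadj_V1[OF j] by blast
    thus ?thesis using that[of u0 a] True by simp
  next
    case False
    hence "u0 \<in> V2 n k" using u0 by blast
    then obtain a where "u1 \<in> V1 n k" "a \<in> {1..n}" "a \<notin> u1" "u0 = insert a u1" using jadj_V2[OF j] by blast
    thus ?thesis using that[of u1 a] by (simp add: insert_commute)
  qed
  have "{p \<in> G n k. set [u0,u1] \<subseteq> T p} = {p \<in> G n k. A \<in> T p \<and> insert a A \<in> T p \<and> True}"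
    unfolding Aa(4) by simp
  thus ?thesis using count1[OF Aa(1-3)] by simp
qed

lemma main3a:
  assumes p: "is_path n k [u0,u1,u2]" and u2: "u2 \<in> V1 n k"
  shows "card {p \<in> G n k. set [u0,u1,u2] \<subseteq> T p} = n - k - 1"
proof -
  have j1: "jadj n k u0 u1" using path_adj[OF p, of 0] by simp
  have j2: "jadj n k u1 u2" using path_adj[OF p, of 1] by simp
  have d: "u0 \<noteq> u2" using p unfolding is_path_def by simp
  obtain c where c: "u1 \<in> V2 n k" "c \<notin> u2" "u1 = insert c u2"
    using jadj_V1[OF _ u2, of u1] j2 jadj_sym by blast
  obtain a where a: "u0 \<in> V1 n k" "a \<in> {1..n}" "a \<notin> u0" "u1 = insert a u0"
    using jadj_V2[OF _ c(1), of u0] j1 jadj_sym by blast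
  have ca: "c \<noteq> a"
  proof
    assume "c = a" hence "u0 = u2" using a c insert_ident by metis
    thus False using d by simp
  qed
  have cA: "c \<in> u0" using a(4) c(3) ca by blast
  have "u2 = u1 - {c}" using c by simp
  hence u2e: "u2 = insert a u0 - {c}" using a(4) by simp
  have "{p \<in> G n k. set [u0,u1,u2] \<subseteq> T p} = {p \<in> G n k. u0 \<in> T p \<and> insert a u0 \<in> T p \<and> insert a u0 - {c} \<in> T p}"
    unfolding u2e a(4) by simp
  thus ?thesis using count2[OF a(1-3) cA] by simp
qed

lemma main3b:
  assumes p: "is_path n k [u0,u1,u2]" and u2: "u2 \<in> V2 n k"
  shows "card {p \<in> G n k. set [u0,u1,u2] \<subseteq> T p} = k"
proof -
  have j1: "jadj n k u0 u1" using path_adj[OF p, of 0] by simp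
  have j2: "jadj n k u1 u2" using path_adj[OF p, of 1] by simp
  have d: "u0 \<noteq> u2" using p unfolding is_path_def by simp
  obtain c where c: "u1 \<in> V1 n k" "c \<in> {1..n}" "c \<notin> u1" "u2 = insert c u1"
    using jadj_V2[OF _ u2, of u1] j2 jadj_sym by blast
  obtain a where a: "u0 \<in> V2 n k" "a \<in> {1..n}" "a \<notin> u1" "u0 = insert a u1"
    using jadj_V1[OF _ c(1), of u0] j1 jadj_sym by blast
  have ca: "c \<noteq> a" using d a c by blast
  have "{p \<in> G n k. set [u0,u1,u2] \<subseteq> T p} = {p \<in> G n k. u1 \<in> T p \<and> insert a u1 \<in> T p \<and> insert c u1 \<in> T p}"
    unfolding a(4) c(4) by auto
  thus ?thesis using count3[OF c(1) a(2,3) c(2,3) ca] by simp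
qed

lemma main4a:
  assumes p: "is_path n k [u0,u1,u2,u3]" and u0: "u0 \<in> V1 n k"
  shows "card {p \<in> G n k. set [u0,u1,u2,u3] \<subseteq> T p} = 1"
proof -
  have j1: "jadj n k u0 u1" using path_adj[OF p, of 0] by simp
  have j2: "jadj n k u1 u2" using path_adj[OF p, of 1] by simp
  have j3: "jadj n k u2 u3" using path_adj[OF p, of 2] by simp
  have d: "u0 \<noteq> u2" "u1 \<noteq> u3" using p unfolding is_path_def by auto
  obtain a where a: "u1 \<in> V2 n k" "a \<in> {1..n}" "a \<notin> u0" "u1 = insert a u0"
    using jadj_V1[OF j1 u0] by blast
  obtain b where b: "u2 \<in> V1 n k" "b \<notin> u2" "u1 = insert b u2"
    using jadj_V2[OF j2 a(1)] by blast
  obtain c where c: "c \<in> {1..n}" "c \<notin> u2" "u3 = insert c u2"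
    using jadj_V1[OF j3 b(1)] by blast
  have ba: "b \<noteq> a"
  proof
    assume "b = a" hence "u0 = u2" using a b insert_ident by metis
    thus False using d by simp
  qed
  have bA: "b \<in> u0" using a(4) b(3) ba by blast
  have "u2 = u1 - {b}" using b by simp
  hence u2e: "u2 = insert a u0 - {b}" using a(4) by simp
  have cb: "c \<noteq> b" using d b c by blast
  have cA: "c \<notin> insert a u0" using c(2) cb u2e by blast
  have "{p \<in> G n k. set [u0,u1,u2,u3] \<subseteq> T p} = {p \<in> G n k. u0 \<in> T p \<and> insert a u0 \<in> T p \<and>
      (insert a u0 - {b} \<in> T p \<and> insert c (insert a u0 - {b}) \<in> T p)}"
    unfolding c(3) u2e a(4) by simp
  thus ?thesis using count4[OF u0 a(2,3) bA c(1) cA] by simp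
qed

lemma path4_rev:
  assumes p: "is_path n k [u0,u1,u2,u3]"
  shows "is_path n k [u3,u2,u1,u0]"
proof -
  have j: "jadj n k u0 u1" "jadj n k u1 u2" "jadj n k u2 u3"
    using path_adj[OF p, of 0] path_adj[OF p, of 1] path_adj[OF p, of 2] by simp_all
  have lt: "Suc j < length [u3,u2,u1,u0] \<longleftrightarrow> j = 0 \<or> j = 1 \<or> j = 2" for j by auto
  have "jadj n k ([u3,u2,u1,u0] ! j) ([u3,u2,u1,u0] ! Suc j)" if "Suc j < length [u3,u2,u1,u0]" for j
    using that j jadj_sym unfolding lt by (auto simp: numeral_2_eq_2)
  moreover have "distinct [u3,u2,u1,u0]" "set [u3,u2,u1,u0] \<subseteq> V1 n k \<union> V2 n k"
    using p unfolding is_path_def by auto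
  ultimately show ?thesis unfolding is_path_def by blast
qed

lemma main4:
  assumes p: "is_path n k [u0,u1,u2,u3]"
  shows "card {p \<in> G n k. set [u0,u1,u2,u3] \<subseteq> T p} = 1"
proof (cases "u0 \<in> V1 n k")
  case True thus ?thesis using main4a[OF p] by blast
next
  case False
  hence u0: "u0 \<in> V2 n k" using p unfolding is_path_def by auto
  have j: "jadj n k u0 u1" "jadj n k u1 u2" "jadj n k u2 u3"
    using path_adj[OF p, of 0] path_adj[OF p, of 1] path_adj[OF p, of 2] by simp_all
  have "u1 \<in> V1 n k" using jadj_V2[OF j(1) u0] by blast
  hence "u2 \<in> V2 n k" using jadj_V1[OF j(2)] by blast
  hence u3: "u3 \<in> V1 n k" using jadj_V2[OF j(3)] by blast
  have "set [u0,u1,u2,u3] = set [u3,u2,u1,u0]" by auto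
  thus ?thesis using main4a[OF path4_rev[OF p] u3] by simp
qed


lemma len2: "length us = 2 \<Longrightarrow> \<exists>a b. us = [a,b]"
  by (auto simp: length_Suc_conv numeral_2_eq_2)
lemma len3: "length us = 3 \<Longrightarrow> \<exists>a b c. us = [a,b,c]"
  by (auto simp: length_Suc_conv numeral_3_eq_3)
lemma len4: "length us = 4 \<Longrightarrow> \<exists>a b c d. us = [a,b,c,d]"
proof -
  assume "length us = 4"
  hence "length us = Suc (Suc (Suc (Suc 0)))" by simp
  thus ?thesis by (auto simp: length_Suc_conv)
qed

theorem proposition2p1:
  fixes n k :: nat and us :: "nat set list"
  assumes "1 \<le> k" and "2 * k + 1 \<le> n" and "is_path n k us"
  shows "(length us = 4 \<longrightarrow> num_cycles_containing n k 6 us = 1)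
     \<and> (length us = 3 \<and> us ! 2 \<in> V1 n k \<longrightarrow> num_cycles_containing n k 6 us = n - k - 1)
     \<and> (length us = 3 \<and> us ! 2 \<in> V2 n k \<longrightarrow> num_cycles_containing n k 6 us = k)
     \<and> (length us = 2 \<longrightarrow> num_cycles_containing n k 6 us = k * (n - k - 1))"
proof (intro conjI impI)
  note ne = num_eq[OF assms(3)]
  show "num_cycles_containing n k 6 us = 1" if "length us = 4"
    using len4[OF that] main4 assms(3) ne by auto
  show "num_cycles_containing n k 6 us = n - k - 1" if "length us = 3 \<and> us ! 2 \<in> V1 n k"
    using len3 that main3a assms(3) ne by fastforce
  show "num_cycles_containing n k 6 us = k" if "length us = 3 \<and> us ! 2 \<in> V2 n k"
    using len3 that main3b assms(3) ne by fastforce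
  show "num_cycles_containing n k 6 us = k * (n - k - 1)" if "length us = 2"
    using len2[OF that] main2 assms(3) ne by auto
qed


end
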